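(* Let $t$ be an odd prime and let $n\geq 0$ be an integer such that $8n+1$ is a quadratic nonresidue modulo $t$. Then for every $0\leq i\leq t-1$, \[ \hat{N}_{t-1}(i,t,n)=\frac{\hat{p}_{t-1}(n)}{t}. \] In particular, $\hat{p}_{t-1}(n)\equiv 0\pmod t$.
   Context: A pod is a partition in which the odd parts are distinct (even parts may repeat); its generating function is $\prod_{k\ge1}(1+q^{2k-1})/(1-q^{2k})$. For a pod $\pi$, $\ell(\pi)$ denotes its total number of parts (odd and even). A $(t-1)$-colored pod of $n$ is a tuple $\overrightarrow{\pi}=(\pi_1,\dots,\pi_{t-1})$ of pods whose parts sum in total to $n$; $\hat{p}_{t-1}(n)$ denotes the number of such tuples. The multirank of such a tuple (with $t-1$ even) is \[ \overline{r}(\overrightarrow{\pi})=\sum_{k=1}^{(t-1)/2} k\bigl(\ell(\pi_k)-\ell(\pi_{t-k})\bigr), \] and $\hat{N}_{t-1}(i,t,n)$ denotes the number of $(t-1)$-colored pods of $n$ whose multirank $\overline{r}$ is congruent to $i$ modulo $t$. *)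

theory Defs
  imports "HOL-Library.Multiset" "HOL-Number_Theory.Number_Theory"
begin

definition is_pod :: "nat multiset \<Rightarrow> bool" where
  "is_pod \<pi> \<longleftrightarrow> (\<forall>x \<in># \<pi>. 0 < x) \<and> (\<forall>x. odd x \<longrightarrow> count \<pi> x \<le> 1)"

definition pod_len :: "nat multiset \<Rightarrow> nat" where
  "pod_len \<pi> = size \<pi>"

text \<open>c-colored pods of n: lists (pi_1,...,pi_c) of pods (pi_k = ps ! (k-1))
  whose parts sum in total to n.\<close>
definition colored_pods :: "nat \<Rightarrow> nat \<Rightarrow> nat multiset list set" where
  "colored_pods c n = {ps. length ps = c \<and> (\<forall>\<pi> \<in> set ps. is_pod \<pi>)
                           \<and> sum_list (map sum_mset ps) = n}"

definition p_hat :: "nat \<Rightarrow> nat \<Rightarrow> nat" where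
  "p_hat c n = card (colored_pods c n)"

definition multirank :: "nat \<Rightarrow> nat multiset list \<Rightarrow> int" where
  "multirank t ps = (\<Sum>k = 1..(t - 1) div 2.
       int k * (int (pod_len (ps ! (k - 1))) - int (pod_len (ps ! (t - k - 1)))))"

definition N_hat :: "int \<Rightarrow> nat \<Rightarrow> nat \<Rightarrow> nat" where
  "N_hat i t n = card {ps \<in> colored_pods (t - 1) n. [multirank t ps = i] (mod int t)}"

end

theory Submission
  imports Defs "HOL-Computational_Algebra.Formal_Power_Series" "HOL-Computational_Algebra.Polynomial"
    "HOL-Computational_Algebra.Fundamental_Theorem_Algebra" "HOL-Computational_Algebra.Polynomial_FPS"
begin

unbundle fps_syntax



type_synonym cfps = "complex fps"

definition feq :: "nat \<Rightarrow> cfps \<Rightarrow> cfps \<Rightarrow> bool" where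
  "feq N f g \<longleftrightarrow> (\<forall>k\<le>N. f $ k = g $ k)"

lemma feq_refl[simp]: "feq N f f" by (simp add: feq_def)
lemma feq_sym: "feq N f g \<Longrightarrow> feq N g f" by (simp add: feq_def)
lemma feq_trans[trans]: "feq N f g \<Longrightarrow> feq N g h \<Longrightarrow> feq N f h" by (simp add: feq_def)
lemma feq_eq_trans[trans]: "f = g \<Longrightarrow> feq N g h \<Longrightarrow> feq N f h" by simp
lemma feq_trans_eq[trans]: "feq N f g \<Longrightarrow> g = h \<Longrightarrow> feq N f h" by simp

lemma feq_add: "feq N f f' \<Longrightarrow> feq N g g' \<Longrightarrow> feq N (f + g) (f' + g')"
  by (simp add: feq_def)
lemma feq_diff: "feq N f f' \<Longrightarrow> feq N g g' \<Longrightarrow> feq N (f - g) (f' - g')"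
  by (simp add: feq_def)
lemma feq_mult: "feq N f f' \<Longrightarrow> feq N g g' \<Longrightarrow> feq N (f * g) (f' * g')"
  unfolding feq_def fps_mult_nth by (auto intro!: sum.cong)

lemma feq_mult_left: "feq N g g' \<Longrightarrow> feq N (f * g) (f * g')"
  by (rule feq_mult) auto
lemma feq_mult_right: "feq N f f' \<Longrightarrow> feq N (f * g) (f' * g)"
  by (rule feq_mult) auto

lemma feq_prod: "finite A \<Longrightarrow> (\<And>a. a \<in> A \<Longrightarrow> feq N (f a) (g a)) \<Longrightarrow> feq N (prod f A) (prod g A)"
  by (induction A rule: finite_induct) (auto intro: feq_mult)

lemma feq_sum: "finite A \<Longrightarrow> (\<And>a. a \<in> A \<Longrightarrow> feq N (f a) (g a)) \<Longrightarrow> feq N (sum f A) (sum g A)"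
  by (induction A rule: finite_induct) (auto intro: feq_add)

lemma feq_Xpow_zero: "N < m \<Longrightarrow> feq N (fps_X ^ m * h) 0"
  by (simp add: feq_def fps_X_power_mult_nth)

lemma feq_Xpow_one: "N < m \<Longrightarrow> feq N (1 + fps_X ^ m * h) 1"
  using feq_add[OF feq_refl[of N 1] feq_Xpow_zero[of N m h]] by simp

lemma feq_Xpow_one': "N < m \<Longrightarrow> feq N (1 - fps_X ^ m * h) 1"
  using feq_diff[OF feq_refl[of N 1] feq_Xpow_zero[of N m h]] by simp

lemma feq_inverse:
  assumes "f $ 0 \<noteq> 0" "feq N f g"
  shows "feq N (inverse f) (inverse g)"
proof -
  have g0: "g $ 0 \<noteq> 0" using assms by (simp add: feq_def)
  have "inverse f - inverse g = inverse f * inverse g * (g - f)"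
    using inverse_mult_eq_1'[OF assms(1)] inverse_mult_eq_1'[OF g0]
    by (simp add: algebra_simps)
  moreover have "feq N (inverse f * inverse g * (g - f)) (inverse f * inverse g * 0)"
    using assms(2) by (intro feq_mult_left) (simp add: feq_def)
  ultimately have "feq N (inverse f - inverse g) 0" by simp
  thus ?thesis by (simp add: feq_def)
qed

lemma feq_cancel:
  assumes "u $ 0 \<noteq> 0" "feq N (f * u) (g * u)"
  shows "feq N f g"
proof -
  have "feq N (f * u * inverse u) (g * u * inverse u)"
    by (rule feq_mult_right[OF assms(2)])
  thus ?thesis using inverse_mult_eq_1'[OF assms(1)] by (simp add: mult.assoc)
qed


definition qp :: "nat \<Rightarrow> cfps" where "qp m = (\<Prod>i\<in>{1..m}. 1 - fps_X ^ i)"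

lemma qp_0[simp]: "qp 0 = 1" by (simp add: qp_def)
lemma qp_Suc: "qp (Suc m) = qp m * (1 - fps_X ^ Suc m)"
  by (simp add: qp_def prod.nat_ivl_Suc')

lemma qp_nth0[simp]: "qp m $ 0 = 1"
  by (induction m) (simp_all add: qp_Suc)

lemma qp_nz[simp]: "qp m \<noteq> 0"
  using qp_nth0[of m] by (metis fps_zero_nth zero_neq_one)

lemma qp_feq: "N \<le> a \<Longrightarrow> feq N (qp a) (qp N)"
proof (induction a rule: dec_induct)
  case base thus ?case by simp
next
  case (step a)
  have "feq N (qp a * (1 - fps_X ^ Suc a)) (qp N * 1)"
    using step feq_Xpow_one'[of N "Suc a" 1] by (intro feq_mult) auto
  thus ?case by (simp add: qp_Suc)
qed

fun qb :: "nat \<Rightarrow> nat \<Rightarrow> cfps" where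
  "qb 0 0 = 1"
| "qb 0 (Suc j) = 0"
| "qb (Suc m) 0 = 1"
| "qb (Suc m) (Suc j) = qb m j + fps_X ^ Suc j * qb m (Suc j)"

lemma qb_zero: "m < j \<Longrightarrow> qb m j = 0"
proof (induction m arbitrary: j)
  case 0 thus ?case by (cases j) auto
next
  case (Suc m) thus ?case by (cases j) auto
qed

lemma qb_m0[simp]: "qb m 0 = 1" by (cases m) auto

lemma qb_prod: "j \<le> m \<Longrightarrow> qb m j * qp j * qp (m - j) = qp m"
proof (induction m arbitrary: j)
  case 0 thus ?case by simp
next
  case (Suc m)
  show ?case
  proof (cases j)
    case 0 thus ?thesis by simp
  next
    case (Suc i)
    with Suc.prems have im: "i \<le> m" by simp
    have A: "qb m i * qp (Suc i) * qp (m - i) = qp m * (1 - fps_X ^ Suc i)"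
      using Suc.IH[OF im] by (simp add: qp_Suc algebra_simps)
    have B: "fps_X ^ Suc i * qb m (Suc i) * qp (Suc i) * qp (m - i) = fps_X ^ Suc i * qp m * (1 - fps_X ^ (m - i))"
    proof (cases "i = m")
      case True thus ?thesis by (simp add: qb_zero)
    next
      case False
      then have mi: "m - i = Suc (m - Suc i)" using im by simp
      have h: "qb m (Suc i) * qp (Suc i) * qp (m - Suc i) = qp m" using Suc.IH False im by simp
      have q: "qp (m - i) = qp (m - Suc i) * (1 - fps_X ^ (m - i))"
        using qp_Suc[of "m - Suc i"] mi by simp
      have "fps_X ^ Suc i * qb m (Suc i) * qp (Suc i) * qp (m - i)
          = fps_X ^ Suc i * (qb m (Suc i) * qp (Suc i) * qp (m - Suc i)) * (1 - fps_X ^ (m - i))"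
        by (simp only: q mult.assoc mult.left_commute)
      thus ?thesis using h by simp
    qed
    have "qb (Suc m) j * qp j * qp (Suc m - j) =
          qb m i * qp (Suc i) * qp (m - i) + fps_X ^ Suc i * qb m (Suc i) * qp (Suc i) * qp (m - i)"
      using Suc by (simp add: algebra_simps)
    also have "\<dots> = qp m * (1 - fps_X ^ Suc i) + fps_X ^ Suc i * qp m * (1 - fps_X ^ (m - i))"
      using A B by simp
    also have "\<dots> = qp m * (1 - fps_X ^ Suc m)"
      using im by (simp add: algebra_simps power_add[symmetric])
    finally show ?thesis by (simp add: qp_Suc)
  qed
qed

lemma qb_P2: "qb (Suc m) (Suc j) = fps_X ^ (m - j) * qb m j + qb m (Suc j)"
proof (cases "j \<le> m")
  case False thus ?thesis by (simp add: qb_zero)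
next
  case jm: True
  define U where "U = qp (Suc j) * qp (m - j)"
  have U0: "U \<noteq> 0" by (simp add: U_def)
  have L: "qb (Suc m) (Suc j) * U = qp (Suc m)"
    using qb_prod[of "Suc j" "Suc m"] jm by (simp add: U_def mult.assoc)
  have R1: "fps_X ^ (m - j) * qb m j * U = fps_X ^ (m - j) * qp m * (1 - fps_X ^ Suc j)"
  proof -
    have "fps_X ^ (m - j) * qb m j * U = fps_X ^ (m - j) * (qb m j * qp j * qp (m - j)) * (1 - fps_X ^ Suc j)"
      by (simp add: U_def qp_Suc algebra_simps)
    thus ?thesis using qb_prod[OF jm] by simp
  qed
  have R2: "qb m (Suc j) * U = qp m * (1 - fps_X ^ (m - j))"
  proof (cases "j = m")
    case True thus ?thesis by (simp add: qb_zero)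
  next
    case False
    then have mi: "m - j = Suc (m - Suc j)" using jm by simp
    have h: "qb m (Suc j) * qp (Suc j) * qp (m - Suc j) = qp m" using qb_prod[of "Suc j" m] False jm by simp
    have q: "qp (m - j) = qp (m - Suc j) * (1 - fps_X ^ (m - j))"
      using qp_Suc[of "m - Suc j"] mi by simp
    have "qb m (Suc j) * U = (qb m (Suc j) * qp (Suc j) * qp (m - Suc j)) * (1 - fps_X ^ (m - j))"
      by (simp only: U_def q mult.assoc mult.left_commute)
    thus ?thesis using h by simp
  qed
  have "(fps_X ^ (m - j) * qb m j + qb m (Suc j)) * U = qp (Suc m)"
  proof -
    have "(fps_X ^ (m - j) * qb m j + qb m (Suc j)) * U
        = fps_X ^ (m - j) * qp m * (1 - fps_X ^ Suc j) + qp m * (1 - fps_X ^ (m - j))"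
      using R1 R2 by (simp add: distrib_right)
    also have "\<dots> = qp m * (1 - fps_X ^ (m - j + Suc j))"
      by (simp add: algebra_simps power_add)
    also have "m - j + Suc j = Suc m" using jm by simp
    finally show ?thesis by (simp add: qp_Suc)
  qed
  with L U0 show ?thesis by (metis mult_right_cancel)
qed

lemma qb_DP: "qb (Suc (Suc m)) (Suc (Suc j)) =
   fps_X ^ (m - j) * qb m j + (1 + fps_X ^ Suc m) * qb m (Suc j) + fps_X ^ Suc (Suc j) * qb m (Suc (Suc j))"
proof -
  have "qb (Suc (Suc m)) (Suc (Suc j)) = qb (Suc m) (Suc j) + fps_X ^ Suc (Suc j) * qb (Suc m) (Suc (Suc j))"
    by simp
  also have "qb (Suc m) (Suc j) = fps_X ^ (m - j) * qb m j + qb m (Suc j)" by (rule qb_P2)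
  also have "qb (Suc m) (Suc (Suc j)) = fps_X ^ (m - Suc j) * qb m (Suc j) + qb m (Suc (Suc j))" by (rule qb_P2)
  also have "fps_X ^ Suc (Suc j) * (fps_X ^ (m - Suc j) * qb m (Suc j)) = fps_X ^ Suc m * qb m (Suc j)"
  proof (cases "Suc j \<le> m")
    case True
    hence "Suc (Suc j) + (m - Suc j) = Suc m" by simp
    thus ?thesis by (metis (no_types) mult.assoc power_add)
  next
    case False thus ?thesis by (simp add: qb_zero)
  qed
  ultimately show ?thesis by (simp add: algebra_simps)
qed

lemma qb_1: "qb (Suc (Suc m)) (Suc 0) = (1 + fps_X ^ Suc m) * qb m 0 + fps_X * qb m (Suc 0)"
proof -
  have "qb (Suc (Suc m)) (Suc 0) = qb (Suc m) 0 + fps_X * qb (Suc m) (Suc 0)" by simp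
  also have "qb (Suc m) (Suc 0) = fps_X ^ m * qb m 0 + qb m (Suc 0)"
    using qb_P2[of m 0] by simp
  finally show ?thesis by (simp add: algebra_simps)
qed

lemma qb_feq:
  assumes "N \<le> j" "N \<le> m - j" "j \<le> m"
  shows "feq N (qb m j) (inverse (qp N))"
proof -
  have "feq N (qb m j * qp j * qp (m - j)) (qb m j * qp N * qp N)"
    using assms by (intro feq_mult feq_mult_left qp_feq) auto
  hence "feq N (qb m j * qp N * qp N) (qp N)"
    using qb_prod[OF assms(3)] qp_feq[of N m] assms by (metis feq_sym feq_trans le_add_diff_inverse2 le_trans trans_le_add1)
  hence "feq N (qb m j * (qp N * qp N)) (inverse (qp N) * (qp N * qp N))"
  proof -
    have e: "inverse (qp N) * (qp N * qp N) = qp N"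
      using inverse_mult_eq_1[of "qp N"] by (simp add: mult.assoc[symmetric])
    show ?thesis unfolding e using \<open>feq N (qb m j * qp N * qp N) (qp N)\<close> by (simp add: mult.assoc)
  qed
  thus ?thesis by (rule feq_cancel[rotated]) simp
qed


definition tr :: "int \<Rightarrow> nat" where "tr k = nat (k * (k + 1) div 2)"

lemma tr_int: "2 * int (tr k) = k * (k + 1)"
proof -
  have e: "even (k * (k + 1))" by simp
  have "0 \<le> k * (k + 1)"
    by (cases "k \<ge> 0") (auto intro: mult_nonneg_nonneg mult_nonpos_nonpos)
  thus ?thesis using e unfolding tr_def by (auto elim!: evenE)
qed

definition qA :: "nat \<Rightarrow> int \<Rightarrow> cfps" where
  "qA n k = (if k + int n < 0 then 0 else qb (2 * n) (nat (k + int n)))"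

lemma A_nz: assumes "qA n k \<noteq> 0" shows "- int n \<le> k \<and> k \<le> int n"
proof -
  have a: "\<not> k + int n < 0" and b: "qb (2 * n) (nat (k + int n)) \<noteq> 0"
    using assms by (auto simp: qA_def split: if_splits)
  have "\<not> 2 * n < nat (k + int n)" using b qb_zero by blast
  thus ?thesis using a by linarith
qed

lemma A_out: "\<not> (- int n \<le> k \<and> k \<le> int n) \<Longrightarrow> qA n k = 0"
  using A_nz by blast

lemma A_rec: "qA (Suc n) k = fps_X ^ nat (int n + 1 - k) * qA n (k - 1) + (1 + fps_X ^ (2 * n + 1)) * qA n k
                 + fps_X ^ nat (k + int n + 1) * qA n (k + 1)"
proof -
  consider "k + int n + 1 < 0" | "k + int n + 1 = 0" | "k + int n + 1 = 1" | "k + int n + 1 \<ge> 2" by linarith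
  thus ?thesis
  proof cases
    case 1 thus ?thesis by (simp add: qA_def)
  next
    case 2 thus ?thesis by (simp add: qA_def)
  next
    case 3
    hence "nat (k + int (Suc n)) = Suc 0" "nat (k + int n) = 0" "nat (k + 1 + int n) = Suc 0"
      "nat (k + int n + 1) = 1" by auto
    moreover have "2 * Suc n = Suc (Suc (2 * n))" by simp
    ultimately show ?thesis using 3 qb_1[of "2*n"] by (simp add: qA_def algebra_simps)
  next
    case 4
    define j where "j = nat (k + int n - 1)"
    have e: "nat (k + int (Suc n)) = Suc (Suc j)" "nat (k + int n) = Suc j" "nat (k - 1 + int n) = j"
      "nat (k + 1 + int n) = Suc (Suc j)" "nat (k + int n + 1) = Suc (Suc j)"
      "nat (k + (1 + int n)) = Suc (Suc j)"
      "nat (int n + 1 - k) = 2 * n - j" "2 * Suc n = Suc (Suc (2 * n))"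
      using 4 by (auto simp: j_def)
    have "qA (Suc n) k = qb (Suc (Suc (2 * n))) (Suc (Suc j))"
      using 4 by (simp add: qA_def e)
    also have "\<dots> = fps_X ^ (2 * n - j) * qb (2*n) j + (1 + fps_X ^ Suc (2*n)) * qb (2*n) (Suc j)
       + fps_X ^ Suc (Suc j) * qb (2*n) (Suc (Suc j))" by (rule qb_DP)
    also have "\<dots> = fps_X ^ nat (int n + 1 - k) * qA n (k - 1) + (1 + fps_X ^ (2 * n + 1)) * qA n k
                 + fps_X ^ nat (k + int n + 1) * qA n (k + 1)"
      using 4 by (simp only: qA_def e if_False not_less) simp
    finally show ?thesis .
  qed
qed

definition gA :: "nat \<Rightarrow> int \<Rightarrow> cfps" where "gA n k = qA n k * fps_X ^ tr k"

definition S :: "nat \<Rightarrow> cfps" where "S n = (\<Sum>k\<in>{- int n..int n}. gA n k)"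

lemma S_ext: "{- int n..int n} \<subseteq> J \<Longrightarrow> finite J \<Longrightarrow> (\<Sum>k\<in>J. gA n k) = S n"
  unfolding S_def
  by (rule sum.mono_neutral_right) (auto simp: gA_def A_out)

lemma sum_shift_m1: "(\<Sum>k\<in>{a..b::int}. g (k - 1)) = (\<Sum>k\<in>{a-1..b-1}. g k)"
  by (rule sum.reindex_bij_witness[where i="\<lambda>k. k + 1" and j="\<lambda>k. k - 1"]) auto

lemma sum_shift_p1: "(\<Sum>k\<in>{a..b::int}. g (k + 1)) = (\<Sum>k\<in>{a+1..b+1}. g k)"
  by (rule sum.reindex_bij_witness[where i="\<lambda>k. k - 1" and j="\<lambda>k. k + 1"]) auto

lemma T1: "fps_X ^ nat (int n + 1 - k) * qA n (k - 1) * fps_X ^ tr k = fps_X ^ (n + 1) * gA n (k - 1)"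
proof (cases "qA n (k - 1) = 0")
  case True thus ?thesis by (simp add: gA_def)
next
  case False
  hence r: "- int n \<le> k - 1" "k - 1 \<le> int n" using A_nz by blast+
  have "nat (int n + 1 - k) + tr k = n + 1 + tr (k - 1)"
    using tr_int[of k] tr_int[of "k-1"] r by (simp add: algebra_simps)
  thus ?thesis unfolding gA_def by (simp add: power_add[symmetric] algebra_simps)
qed

lemma T3: "fps_X ^ nat (k + int n + 1) * qA n (k + 1) * fps_X ^ tr k = fps_X ^ n * gA n (k + 1)"
proof (cases "qA n (k + 1) = 0")
  case True thus ?thesis by (simp add: gA_def)
next
  case False
  hence r: "- int n \<le> k + 1" "k + 1 \<le> int n" using A_nz by blast+
  have "nat (k + int n + 1) + tr k = n + tr (k + 1)"
    using tr_int[of k] tr_int[of "k+1"] r by (simp add: algebra_simps)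
  thus ?thesis unfolding gA_def by (simp add: power_add[symmetric] algebra_simps)
qed

lemma gA_rec: "gA (Suc n) k = fps_X ^ (n + 1) * gA n (k - 1) + (1 + fps_X ^ (2 * n + 1)) * gA n k
       + fps_X ^ n * gA n (k + 1)"
proof -
  have "gA (Suc n) k = fps_X ^ nat (int n + 1 - k) * qA n (k - 1) * fps_X ^ tr k
      + (1 + fps_X ^ (2 * n + 1)) * (qA n k * fps_X ^ tr k)
      + fps_X ^ nat (k + int n + 1) * qA n (k + 1) * fps_X ^ tr k"
    unfolding gA_def A_rec by (simp add: algebra_simps)
  also have "\<dots> = fps_X ^ (n + 1) * gA n (k - 1) + (1 + fps_X ^ (2 * n + 1)) * gA n k
       + fps_X ^ n * gA n (k + 1)" by (simp only: T1 T3 gA_def)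
  finally show ?thesis .
qed

lemma S_formula: "S n = (\<Prod>i\<in>{1..n}. (1 + fps_X ^ i) * (1 + fps_X ^ (i - 1)))"
proof (induction n)
  case 0 thus ?case by (simp add: S_def gA_def qA_def tr_def)
next
  case (Suc n)
  let ?I = "{- int (Suc n)..int (Suc n)}"
  have "S (Suc n) = (\<Sum>k\<in>?I. fps_X ^ (n + 1) * gA n (k - 1) + (1 + fps_X ^ (2 * n + 1)) * gA n k
       + fps_X ^ n * gA n (k + 1))"
    unfolding S_def
    unfolding S_def by (intro sum.cong refl) (rule gA_rec)
  also have "\<dots> = fps_X ^ (n + 1) * (\<Sum>k\<in>?I. gA n (k - 1)) + (1 + fps_X ^ (2 * n + 1)) * (\<Sum>k\<in>?I. gA n k)
       + fps_X ^ n * (\<Sum>k\<in>?I. gA n (k + 1))"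
    by (simp add: sum.distrib sum_distrib_left)
  also have "(\<Sum>k\<in>?I. gA n (k - 1)) = S n"
    by (subst sum_shift_m1, rule S_ext) auto
  also have "(\<Sum>k\<in>?I. gA n (k + 1)) = S n"
    by (subst sum_shift_p1, rule S_ext) auto
  also have "(\<Sum>k\<in>?I. gA n k) = S n"
    by (rule S_ext) auto
  also have "fps_X ^ (n + 1) * S n + (1 + fps_X ^ (2 * n + 1)) * S n + fps_X ^ n * S n
       = S n * ((1 + fps_X ^ Suc n) * (1 + fps_X ^ (Suc n - 1)))"
    by (simp add: algebra_simps power_add[symmetric] mult_2)
  finally show ?case using Suc.IH by (simp add: prod.nat_ivl_Suc')
qed


lemma int_mul_succ_nonneg: "0 \<le> (a::int) * (a + 1)"
  by (cases "a \<ge> 0") (auto intro: mult_nonneg_nonneg mult_nonpos_nonpos)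

lemma tr_small: assumes "tr k \<le> N" shows "- int N - 1 \<le> k \<and> k \<le> int N"
proof -
  have "0 \<le> (k - 1) * k" using int_mul_succ_nonneg[of "k - 1"] by simp
  moreover have "0 \<le> (k + 1) * (k + 2)" using int_mul_succ_nonneg[of "k + 1"] by (simp add: algebra_simps)
  moreover have "2 * int (tr k) \<le> 2 * int N" using assms by simp
  ultimately show ?thesis using tr_int[of k] by (simp add: algebra_simps)
qed

definition Theta :: "nat \<Rightarrow> cfps" where "Theta n = (\<Sum>k\<in>{- int n..int n}. fps_X ^ tr k)"

lemma S_feq_Theta:
  assumes "2 * N + 2 \<le> n"
  shows "feq N (S n) (inverse (qp N) * Theta n)"
  unfolding S_def Theta_def sum_distrib_left
proof (rule feq_sum, simp)
  fix k assume k: "k \<in> {- int n..int n}"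
  show "feq N (gA n k) (inverse (qp N) * fps_X ^ tr k)"
  proof (cases "tr k \<le> N")
    case False
    hence "feq N (gA n k) 0" "feq N (inverse (qp N) * fps_X ^ tr k) 0"
      unfolding gA_def using feq_Xpow_zero[of N "tr k"] by (simp_all add: mult.commute)
    thus ?thesis by (meson feq_sym feq_trans)
  next
    case True
    note r = tr_small[OF True]
    have hA: "qA n k = qb (2 * n) (nat (k + int n))" using r assms by (simp add: qA_def)
    have "feq N (qb (2 * n) (nat (k + int n))) (inverse (qp N))"
      by (rule qb_feq) (use r assms in linarith)+
    thus ?thesis unfolding gA_def hA by (rule feq_mult_right)
  qed
qed

definition Dp :: "nat \<Rightarrow> cfps" where "Dp a = (\<Prod>i\<in>{1..a}. 1 + fps_X ^ i)"

lemma Dp_Suc: "Dp (Suc a) = Dp a * (1 + fps_X ^ Suc a)"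
  by (simp add: Dp_def prod.nat_ivl_Suc')

lemma Dp_feq: "N \<le> a \<Longrightarrow> feq N (Dp a) (Dp N)"
proof (induction a rule: dec_induct)
  case base thus ?case by simp
next
  case (step a)
  have "feq N (Dp a * (1 + fps_X ^ Suc a)) (Dp N * 1)"
    using step feq_Xpow_one[of N "Suc a" 1] by (intro feq_mult) auto
  thus ?case by (simp add: Dp_Suc)
qed

lemma Dp_nth0[simp]: "Dp a $ 0 = 1"
  by (induction a) (simp_all add: Dp_Suc Dp_def)

lemma Dp0_shift: "(\<Prod>i\<in>{0..a}. (1::cfps) + fps_X ^ i) = 2 * Dp a"
  by (induction a) (simp_all add: Dp_Suc Dp_def prod.nat_ivl_Suc' mult_ac)

lemma S_eq_Dp: "1 \<le> n \<Longrightarrow> S n = 2 * Dp n * Dp (n - 1)"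
proof -
  assume n: "1 \<le> n"
  have "S n = Dp n * (\<Prod>i\<in>{1..n}. 1 + fps_X ^ (i - 1))"
    by (simp add: S_formula Dp_def prod.distrib)
  also have "(\<Prod>i\<in>{1..n}. 1 + fps_X ^ (i - 1)) = (\<Prod>i\<in>{0..n-1}. (1::cfps) + fps_X ^ i)"
    using n by (intro prod.reindex_bij_witness[where i="\<lambda>i. i + 1" and j="\<lambda>i. i - 1"]) auto
  also have "\<dots> = 2 * Dp (n - 1)" by (rule Dp0_shift)
  finally show ?thesis by (simp add: mult_ac)
qed

definition Oq :: "nat \<Rightarrow> cfps" where "Oq M = (\<Prod>m\<in>{1..M}. 1 - fps_X ^ (2 * m - 1))"
definition Eq2 :: "nat \<Rightarrow> cfps" where "Eq2 M = (\<Prod>m\<in>{1..M}. 1 - fps_X ^ (2 * m))"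

lemma prod_split_odd_even:
  fixes M :: nat shows "(\<Prod>s\<in>{1..2*M}. h s) = (\<Prod>m\<in>{1..M}. h (2 * m - 1)) * (\<Prod>m\<in>{1..M}. (h (2 * m) :: 'a::comm_monoid_mult))"
proof (induction M)
  case 0 thus ?case by simp
next
  case (Suc M)
  have "{1..2 * Suc M} = insert (Suc (Suc (2*M))) (insert (Suc (2 * M)) {1..2*M})" by auto
  hence "(\<Prod>s\<in>{1..2*Suc M}. h s) = h (Suc (Suc (2*M))) * (h (Suc (2*M)) * (\<Prod>s\<in>{1..2*M}. h s))"
    by simp
  thus ?case using Suc by (simp add: prod.nat_ivl_Suc' mult_ac)
qed

lemma qp_split: "qp (2 * M) = Oq M * Eq2 M"
  unfolding qp_def Oq_def Eq2_def by (rule prod_split_odd_even)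

lemma Dp_qp: "Dp M * qp M = Eq2 M"
  unfolding Dp_def qp_def Eq2_def prod.distrib[symmetric]
  by (intro prod.cong refl) (simp add: algebra_simps power_add[symmetric] mult_2_right)

lemma fps_prod_nth0: "(prod f B) $ 0 = (\<Prod>a\<in>B. (f a :: cfps) $ 0)"
  by (induction B rule: infinite_finite_induct) auto

lemma Eq2_nth0[simp]: "Eq2 M $ 0 = 1"
  by (simp add: Eq2_def fps_prod_nth0)

lemma Oq_nth0[simp]: "Oq M $ 0 = 1"
  by (simp add: Oq_def fps_prod_nth0)

lemma euler_feq:
  assumes "N \<le> M" shows "feq N (Oq M * Dp M) 1"
proof -
  have a: "feq N (qp (2 * M)) (qp N)" using qp_feq[of N "2*M"] assms by simp
  have b: "feq N (qp M) (qp N)" using qp_feq[of N M] assms by simp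
  have "feq N (qp (2 * M)) (qp M)" using feq_trans[OF a feq_sym[OF b]] .
  hence "feq N (Dp M * qp (2 * M)) (Dp M * qp M)" by (rule feq_mult_left)
  moreover have "Dp M * qp (2 * M) = (Oq M * Dp M) * Eq2 M" unfolding qp_split by (simp only: mult_ac)
  moreover have "Dp M * qp M = 1 * Eq2 M" by (simp add: Dp_qp)
  ultimately have "feq N ((Oq M * Dp M) * Eq2 M) (1 * Eq2 M)" by simp
  thus ?thesis by (rule feq_cancel[rotated]) simp
qed

lemma gauss_feq:
  assumes "N \<le> M" "2 * N + 2 \<le> n"
  shows "feq N (Oq M * Theta n) (2 * Eq2 M)"
proof -
  have n1: "1 \<le> n" "N \<le> n" "N \<le> n - 1" using assms by auto
  have "feq N (2 * Dp N * Dp N) (S n)"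
    unfolding S_eq_Dp[OF n1(1)]
    by (intro feq_mult feq_refl; rule feq_sym, rule Dp_feq) (use n1 in auto)
  also have "feq N (S n) (inverse (qp N) * Theta n)" by (rule S_feq_Theta) fact
  finally have "feq N (2 * Dp N * Dp N * qp N) (inverse (qp N) * Theta n * qp N)"
    by (rule feq_mult_right)
  also have "inverse (qp N) * Theta n * qp N = Theta n"
    using inverse_mult_eq_1[of "qp N"] by (simp add: mult_ac)
  finally have T: "feq N (Theta n) (2 * Dp N * Dp N * qp N)" by (rule feq_sym)
  have d: "feq N (Dp N) (Dp M)" using Dp_feq[of N M] assms by (simp add: feq_sym)
  have q: "feq N (qp N) (qp M)" using qp_feq[of N M] assms by (simp add: feq_sym)
  have "feq N (2 * Dp N * Dp N * qp N) (2 * Dp M * Dp M * qp M)"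
    by (rule feq_mult[OF feq_mult[OF feq_mult[OF feq_refl d] d] q])
  also have "2 * Dp M * Dp M * qp M = 2 * Dp M * Eq2 M" by (metis Dp_qp mult.assoc)
  finally have "feq N (Theta n) (2 * Dp M * Eq2 M)" using T by (meson feq_trans)
  hence "feq N (Oq M * Theta n) (Oq M * (2 * Dp M * Eq2 M))" by (rule feq_mult_left)
  also have "Oq M * (2 * Dp M * Eq2 M) = 2 * Eq2 M * (Oq M * Dp M)" by (simp add: mult_ac)
  also have "feq N (2 * Eq2 M * (Oq M * Dp M)) (2 * Eq2 M * 1)"
    by (rule feq_mult_left, rule euler_feq) fact
  finally show ?thesis by simp
qed


definition podsL :: "nat \<Rightarrow> nat \<Rightarrow> nat multiset set" where
  "podsL L n = {\<pi>. is_pod \<pi> \<and> (\<forall>y\<in>#\<pi>. y \<le> L) \<and> sum_mset \<pi> = n}"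

lemma size_le_sum: "(\<forall>y\<in>#\<pi>. 0 < y) \<Longrightarrow> size \<pi> \<le> sum_mset (\<pi>::nat multiset)"
  by (induction \<pi>) auto

lemma elem_le_sum: "y \<in># \<pi> \<Longrightarrow> y \<le> sum_mset (\<pi>::nat multiset)"
  by (induction \<pi>) auto

lemma finite_pos_msets: "finite {\<pi>::nat multiset. (\<forall>y\<in>#\<pi>. 0 < y) \<and> sum_mset \<pi> = n}"
proof (rule finite_subset)
  show "{\<pi>::nat multiset. (\<forall>y\<in>#\<pi>. 0 < y) \<and> sum_mset \<pi> = n} \<subseteq> (\<Union>k\<in>{0..n}. multisets_of_size {1..n} k)"
  proof
    fix \<pi> assume h: "\<pi> \<in> {\<pi>::nat multiset. (\<forall>y\<in>#\<pi>. 0 < y) \<and> sum_mset \<pi> = n}"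
    hence "size \<pi> \<le> n" using size_le_sum by auto
    moreover have "set_mset \<pi> \<subseteq> {1..n}" using h elem_le_sum by fastforce
    ultimately show "\<pi> \<in> (\<Union>k\<in>{0..n}. multisets_of_size {1..n} k)"
      by (auto simp: multisets_of_size_def)
  qed
qed auto

lemma finite_podsL: "finite (podsL L n)"
  by (rule finite_subset[OF _ finite_pos_msets[of n]]) (auto simp: podsL_def is_pod_def)

definition fac :: "complex \<Rightarrow> nat \<Rightarrow> cfps" where
  "fac x s = Abs_fps (\<lambda>i. if s dvd i \<and> (odd s \<longrightarrow> i div s \<le> 1) then x ^ (i div s) else 0)"

definition PP :: "complex \<Rightarrow> nat \<Rightarrow> cfps" where
  "PP x L = (\<Prod>s\<in>{1..L}. fac x s)"

lemma podsL_0: "podsL 0 n = (if n = 0 then {{#}} else {})"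
proof -
  have "\<pi> \<in> podsL 0 n \<longleftrightarrow> \<pi> = {#} \<and> n = 0" for \<pi>
  proof
    assume h: "\<pi> \<in> podsL 0 n"
    have "\<pi> = {#}"
    proof (rule ccontr)
      assume "\<pi> \<noteq> {#}"
      then obtain y where "y \<in># \<pi>" by blast
      thus False using h by (force simp: podsL_def is_pod_def)
    qed
    thus "\<pi> = {#} \<and> n = 0" using h by (simp add: podsL_def)
  qed (auto simp: podsL_def is_pod_def)
  thus ?thesis by auto
qed

lemma podsL_Suc_bij:
  fixes x :: complex and L n :: nat
  defines "s \<equiv> Suc L"
  defines "C \<equiv> {c. c * s \<le> n \<and> (odd s \<longrightarrow> c \<le> 1)}"
  shows "(\<Sum>\<pi>\<in>podsL (Suc L) n. x ^ size \<pi>) =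
         (\<Sum>p\<in>Sigma C (\<lambda>c. podsL L (n - c * s)). x ^ (size (snd p) + fst p))"
proof (rule sum.reindex_bij_witness[where j="\<lambda>\<pi>. (count \<pi> s, \<pi> - replicate_mset (count \<pi> s) s)"
      and i="\<lambda>p. snd p + replicate_mset (fst p) s"])
  fix \<pi> assume "\<pi> \<in> podsL (Suc L) n"
  show "snd (count \<pi> s, \<pi> - replicate_mset (count \<pi> s) s) + replicate_mset (fst (count \<pi> s, \<pi> - replicate_mset (count \<pi> s) s)) s = \<pi>"
    by (simp, rule multiset_eqI) simp
next
  fix \<pi> assume p: "\<pi> \<in> podsL (Suc L) n"
  let ?c = "count \<pi> s" and ?r = "\<pi> - replicate_mset (count \<pi> s) s"
  have sub: "replicate_mset ?c s \<subseteq># \<pi>" by (simp add: subseteq_mset_def)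
  have eq: "\<pi> = ?r + replicate_mset ?c s" by (rule multiset_eqI) simp
  have sm: "sum_mset \<pi> = sum_mset ?r + ?c * s"
    by (subst eq) (simp add: sum_mset_replicate_mset)
  have cnt: "\<And>y. count ?r y = (if y = s then 0 else count \<pi> y)" by simp
  have "?c * s \<le> n" using p sm by (simp add: podsL_def)
  moreover have "odd s \<longrightarrow> ?c \<le> 1" using p by (simp add: podsL_def is_pod_def)
  moreover have "?r \<in> podsL L (n - ?c * s)"
  proof -
    have "\<forall>y\<in>#?r. y \<le> L"
    proof
      fix y assume y: "y \<in># ?r"
      hence "y \<noteq> s" using cnt[of y] by (metis count_eq_zero_iff)
      moreover have "y \<in># \<pi>" using y by (meson in_diffD)
      ultimately show "y \<le> L" using p by (auto simp: podsL_def s_def)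
    qed
    moreover have "is_pod ?r" using p unfolding podsL_def is_pod_def
      by (auto dest: in_diffD simp: cnt)
    moreover have "sum_mset ?r = n - ?c * s" using p sm by (auto simp: podsL_def)
    ultimately show ?thesis by (simp add: podsL_def)
  qed
  ultimately show "(count \<pi> s, ?r) \<in> Sigma C (\<lambda>c. podsL L (n - c * s))" by (simp add: C_def)
next
  fix p assume p: "p \<in> Sigma C (\<lambda>c. podsL L (n - c * s))"
  obtain c \<pi> where pc: "p = (c, \<pi>)" by (cases p)
  have "count \<pi> s = 0" using p pc by (auto simp: podsL_def s_def count_eq_zero_iff)
  thus "(count (snd p + replicate_mset (fst p) s) s,
         snd p + replicate_mset (fst p) s - replicate_mset (count (snd p + replicate_mset (fst p) s) s) s) = p"
    using pc by simp
next
  fix p assume p: "p \<in> Sigma C (\<lambda>c. podsL L (n - c * s))"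
  obtain c \<pi> where pc: "p = (c, \<pi>)" by (cases p)
  have c: "c * s \<le> n" "odd s \<longrightarrow> c \<le> 1" and pi: "\<pi> \<in> podsL L (n - c * s)"
    using p pc by (auto simp: C_def)
  have cs: "count \<pi> s = 0" using pi by (auto simp: podsL_def s_def count_eq_zero_iff)
  have "is_pod (\<pi> + replicate_mset c s)"
    using pi c cs unfolding podsL_def is_pod_def by (auto simp: s_def)
  moreover have "\<forall>y\<in>#\<pi> + replicate_mset c s. y \<le> Suc L"
    using pi by (auto simp: podsL_def s_def)
  moreover have "sum_mset (\<pi> + replicate_mset c s) = n"
    using pi c by (simp add: podsL_def sum_mset_replicate_mset)
  ultimately show "snd p + replicate_mset (fst p) s \<in> podsL (Suc L) n"
    using pc by (simp add: podsL_def)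
next
  fix \<pi> assume "\<pi> \<in> podsL (Suc L) n"
  show "x ^ (size (snd (count \<pi> s, \<pi> - replicate_mset (count \<pi> s) s)) + fst (count \<pi> s, \<pi> - replicate_mset (count \<pi> s) s)) = x ^ size \<pi>"
  proof -
    have sub: "replicate_mset (count \<pi> s) s \<subseteq># \<pi>" by (simp add: subseteq_mset_def)
    have "size (\<pi> - replicate_mset (count \<pi> s) s) + count \<pi> s = size \<pi>"
      using size_Diff_submset[OF sub] size_mset_mono[OF sub] by simp
    thus ?thesis by simp
  qed
qed

lemma fac_nth: "fac x s $ i = (if s dvd i \<and> (odd s \<longrightarrow> i div s \<le> 1) then x ^ (i div s) else 0)"
  by (simp add: fac_def)

lemma PP_Suc: "PP x (Suc L) = fac x (Suc L) * PP x L"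
  by (simp add: PP_def prod.nat_ivl_Suc' mult.commute)

lemma PP_nth: "PP x L $ n = (\<Sum>\<pi>\<in>podsL L n. x ^ size \<pi>)"
proof (induction L arbitrary: n)
  case 0
  have "PP x 0 = 1" by (simp add: PP_def)
  thus ?case by (cases n) (simp_all add: podsL_0)
next
  case (Suc L)
  define s where "s = Suc L"
  define C where "C = {c. c * s \<le> n \<and> (odd s \<longrightarrow> c \<le> 1)}"
  have s0: "0 < s" by (simp add: s_def)
  have "c \<le> n" if "c \<in> C" for c
  proof -
    have a: "c * s \<le> n" using that unfolding C_def by blast
    have "c * 1 \<le> c * s" using s0 by (intro mult_le_mono2) simp
    thus ?thesis using a by linarith
  qed
  hence "C \<subseteq> {0..n}" by auto
  hence finC: "finite C" by (rule finite_subset) simp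
  let ?g = "\<lambda>i. (if s dvd i \<and> (odd s \<longrightarrow> i div s \<le> 1) then x ^ (i div s) else 0) * (\<Sum>\<pi>\<in>podsL L (n - i). x ^ size \<pi>)"
  have "PP x (Suc L) $ n = (\<Sum>i=0..n. ?g i)"
    by (simp only: PP_Suc fps_mult_nth fac_nth Suc.IH s_def)
  also have "\<dots> = (\<Sum>i\<in>(\<lambda>c. c * s) ` C. ?g i)"
  proof (rule sum.mono_neutral_right)
    show "(\<lambda>c. c * s) ` C \<subseteq> {0..n}" by (auto simp: C_def simp del: mult_is_0)
    show "\<forall>i\<in>{0..n} - (\<lambda>c. c * s) ` C. ?g i = 0"
    proof
      fix i assume i: "i \<in> {0..n} - (\<lambda>c. c * s) ` C"
      show "?g i = 0"
      proof (cases "s dvd i \<and> (odd s \<longrightarrow> i div s \<le> 1)")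
        case True
        then obtain c where c: "i = c * s" by (metis dvd_def mult.commute)
        have d: "i div s = c" using c s0 by simp
        have "c \<in> C" unfolding C_def using True i c d by simp
        thus ?thesis using i c by blast
      next
        case False
        show ?thesis by (subst if_not_P[OF False]) simp
      qed
    qed
  qed simp
  also have "\<dots> = (\<Sum>c\<in>C. ?g (c * s))"
  proof -
    have inj: "inj_on (\<lambda>c. c * s) C" using s0 by (auto simp: inj_on_def)
    show ?thesis by (simp only: sum.reindex[OF inj] o_def)
  qed
  also have "\<dots> = (\<Sum>c\<in>C. \<Sum>\<pi>\<in>podsL L (n - c * s). x ^ (size \<pi> + c))"
  proof (intro sum.cong refl)
    fix c assume c: "c \<in> C"
    have d: "c * s div s = c" using s0 by simp
    have "odd s \<longrightarrow> c \<le> 1" using c by (simp add: C_def)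
    hence "?g (c * s) = x ^ c * (\<Sum>\<pi>\<in>podsL L (n - c * s). x ^ size \<pi>)" by (simp only: d) simp
    also have "\<dots> = (\<Sum>\<pi>\<in>podsL L (n - c * s). x ^ (size \<pi> + c))"
      by (simp add: sum_distrib_left power_add mult.commute)
    finally show "?g (c * s) = (\<Sum>\<pi>\<in>podsL L (n - c * s). x ^ (size \<pi> + c))" .
  qed
  also have "\<dots> = (\<Sum>p\<in>Sigma C (\<lambda>c. podsL L (n - c * s)). x ^ (size (snd p) + fst p))"
    using finC finite_podsL by (simp add: sum.Sigma split_beta)
  also have "\<dots> = (\<Sum>\<pi>\<in>podsL (Suc L) n. x ^ size \<pi>)"
    unfolding C_def s_def by (rule podsL_Suc_bij[symmetric])
  finally show ?case .
qed


lemma prod_roots_monic: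
  assumes t: "0 < t"
  shows "(\<Prod>z\<in>{z::complex. z ^ t = 1}. v - z) = v ^ t - 1"
proof -
  define p :: "complex poly" where "p = [:-1:] + monom 1 t"
  have pv: "poly p v = v ^ t - 1" for v by (simp add: p_def poly_monom)
  have deg: "degree p = t" using t unfolding p_def
    by (subst degree_add_eq_right) (auto simp: degree_monom_eq)
  have lc: "lead_coeff p = 1" using t unfolding p_def
    by (subst lead_coeff_add_le) (auto simp: degree_monom_eq)
  have rs: "rsquarefree p"
    unfolding rsquarefree_roots
  proof (intro allI notI)
    fix a assume h: "poly p a = 0 \<and> poly (pderiv p) a = 0"
    have z: "poly p 0 = -1" using t by (simp add: pv)
    have a0: "a \<noteq> 0"
    proof
      assume "a = 0"
      hence "poly p 0 = 0" using h by simp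
      thus False using z by simp
    qed
    have "pderiv p = monom (of_nat t) (t - 1)"
      by (simp add: p_def pderiv_add pderiv_monom)
    hence "poly (pderiv p) a = of_nat t * a ^ (t - 1)" by (simp add: poly_monom)
    thus False using h a0 t by simp
  qed
  have "smult (lead_coeff p) (\<Prod>z|poly p z = 0. [:-z, 1:]) = p"
    by (rule complex_poly_decompose_rsquarefree[OF rs])
  hence "(\<Prod>z|poly p z = 0. [:-z, 1:]) = p" by (simp add: lc)
  hence "poly (\<Prod>z|poly p z = 0. [:-z, 1:]) v = poly p v" by simp
  moreover have "{z. poly p z = 0} = {z. z ^ t = 1}" by (auto simp: pv)
  ultimately show ?thesis by (simp add: poly_prod pv)
qed

lemma prod_roots_one_minus:
  assumes t: "0 < t"
  shows "(\<Prod>z\<in>{z::complex. z ^ t = 1}. 1 - w * z) = 1 - w ^ t"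
proof (cases "w = 0")
  case True thus ?thesis using t by simp
next
  case False
  let ?U = "{z::complex. z ^ t = 1}"
  have cU: "card ?U = t" using card_roots_unity_eq[OF t] .
  have "(\<Prod>z\<in>?U. 1 - w * z) = (\<Prod>z\<in>?U. w * (inverse w - z))"
    using False by (intro prod.cong refl) (simp add: algebra_simps)
  also have "\<dots> = w ^ t * (\<Prod>z\<in>?U. inverse w - z)" by (simp add: prod.distrib cU)
  also have "\<dots> = w ^ t * (inverse w ^ t - 1)" by (simp add: prod_roots_monic[OF t])
  also have "\<dots> = 1 - w ^ t" using False by (simp add: algebra_simps power_mult_distrib[symmetric])
  finally show ?thesis .
qed

lemma prod_roots_poly:
  assumes t: "0 < t"
  shows "(\<Prod>z\<in>{z::complex. z ^ t = 1}. [:1, -z:]) = 1 - monom 1 t"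
proof -
  have "poly (\<Prod>z\<in>{z::complex. z ^ t = 1}. [:1, -z:]) = poly (1 - monom 1 t)"
    by (rule ext) (simp add: poly_prod prod_roots_one_minus[OF t] poly_monom algebra_simps)
  thus ?thesis by (simp add: poly_eq_poly_eq_iff)
qed

lemma prod_roots_fps:
  assumes t: "0 < t" and Y: "Y $ 0 = 0"
  shows "(\<Prod>z\<in>{z::complex. z ^ t = 1}. 1 - fps_const z * Y) = 1 - Y ^ t"
proof -
  let ?U = "{z::complex. z ^ t = 1}"
  have lin: "fps_of_poly [:1, -z:] oo Y = 1 - fps_const z * Y" for z :: complex
  proof -
    have "fps_of_poly [:1, -z:] = 1 - fps_const z * fps_X"
      by (rule fps_ext) (simp add: coeff_pCons split: nat.split)
    hence "fps_of_poly [:1, -z:] oo Y = (1 oo Y) - (fps_const z oo Y) * (fps_X oo Y)"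
      by (simp only: fps_compose_sub_distrib fps_compose_mult_distrib[OF Y])
    also have "\<dots> = 1 - fps_const z * Y" using Y by (simp only: fps_compose_1 fps_const_compose fps_X_fps_compose_startby0)
    finally show ?thesis .
  qed
  have "(\<Prod>z\<in>?U. 1 - fps_const z * Y) = (\<Prod>z\<in>?U. fps_of_poly [:1, -z:] oo Y)"
    by (simp only: lin)
  also have "\<dots> = fps_of_poly (\<Prod>z\<in>?U. [:1, -z:]) oo Y"
    by (simp only: fps_of_poly_prod fps_compose_prod_distrib[OF Y])
  also have "\<dots> = fps_of_poly (1 - monom 1 t) oo Y" by (simp only: prod_roots_poly[OF t])
  also have "fps_of_poly (1 - monom 1 t) = 1 - fps_X ^ t"
    by (rule fps_ext) (simp add: coeff_monom)
  also have "(1 - fps_X ^ t) oo Y = 1 - Y ^ t"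
    by (simp only: fps_compose_sub_distrib fps_compose_1 fps_compose_power[OF Y, symmetric] fps_X_fps_compose_startby0[OF Y])
  finally show ?thesis .
qed


lemma fac_odd:
  assumes "odd s" shows "fac x s = 1 + fps_const x * fps_X ^ s"
proof (rule fps_ext)
  fix i
  have s0: "0 < s" using assms by (cases s) auto
  have iff: "(s dvd i \<and> i div s \<le> 1) \<longleftrightarrow> (i = 0 \<or> i = s)"
  proof
    assume h: "s dvd i \<and> i div s \<le> 1"
    then obtain k where k: "i = s * k" by blast
    hence "k \<le> 1" using h s0 by simp
    thus "i = 0 \<or> i = s" using k by (cases k) auto
  qed (use s0 in auto)
  show "fac x s $ i = (1 + fps_const x * fps_X ^ s) $ i"
    using iff s0 assms by (auto simp: fac_nth)
qed

lemma fac_even: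
  assumes "even s" "0 < s" shows "fac x s * (1 - fps_const x * fps_X ^ s) = 1"
proof (rule fps_ext)
  fix i
  let ?f = "fac x s"
  have e: "?f * (1 - fps_const x * fps_X ^ s) = ?f - fps_const x * (fps_X ^ s * ?f)"
    by (simp add: algebra_simps)
  have "(?f - fps_const x * (fps_X ^ s * ?f)) $ i = ?f $ i - x * (if i < s then 0 else ?f $ (i - s))"
    by (simp add: fps_X_power_mult_nth)
  also have "\<dots> = (if i = 0 then 1 else 0)"
  proof (cases "i < s")
    case True
    thus ?thesis using assms by (cases "i = 0") (auto simp: fac_nth dest: dvd_imp_le)
  next
    case False
    have d: "s dvd i \<longleftrightarrow> s dvd (i - s)" using False by (simp add: dvd_minus_self)
    show ?thesis
    proof (cases "s dvd i")
      case True
      have ii: "i = (i - s) + s" using False by simp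
      have q: "i div s = Suc ((i - s) div s)"
        using assms(2) by (subst ii) simp
      show ?thesis using True d False assms q by (auto simp: fac_nth)
    next
      case nd: False
      thus ?thesis using d False assms by (auto simp: fac_nth)
    qed
  qed
  finally show "(?f * (1 - fps_const x * fps_X ^ s)) $ i = 1 $ i" by (simp add: e)
qed

lemma fac_nth0[simp]: "fac x s $ 0 = 1"
  by (simp add: fac_nth)

lemma prod_roots_fac:
  assumes t: "odd t" and s: "0 < s"
  shows "(\<Prod>z\<in>{z::complex. z ^ t = 1}. fac z s) = fac 1 (t * s)"
proof -
  let ?U = "{z::complex. z ^ t = 1}"
  have t0: "0 < t" using t by (cases t) auto
  have Y0: "fps_nth (uminus (fps_X ^ s)) 0 = (0::complex)" "fps_nth (fps_X ^ s) 0 = (0::complex)" using s by auto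
  show ?thesis
  proof (cases "odd s")
    case True
    have "(\<Prod>z\<in>?U. fac z s) = (\<Prod>z\<in>?U. 1 - fps_const z * (uminus (fps_X ^ s)))"
      by (intro prod.cong refl) (simp add: fac_odd[OF True])
    also have "\<dots> = 1 - (uminus (fps_X ^ s)) ^ t" by (rule prod_roots_fps[OF t0 Y0(1)])
    also have "\<dots> = 1 + fps_X ^ (t * s)" using t by (simp add: power_mult[symmetric] mult.commute)
    also have "\<dots> = fac 1 (t * s)" using True t by (simp add: fac_odd)
    finally show ?thesis .
  next
    case False
    have ts: "even (t * s)" "0 < t * s" using False s t0 by auto
    have "(\<Prod>z\<in>?U. fac z s) * (1 - fps_X ^ (t * s)) = (\<Prod>z\<in>?U. fac z s) * (\<Prod>z\<in>?U. 1 - fps_const z * fps_X ^ s)"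
      by (simp add: prod_roots_fps[OF t0 Y0(2)] power_mult[symmetric] mult.commute)
    also have "\<dots> = (\<Prod>z\<in>?U. fac z s * (1 - fps_const z * fps_X ^ s))" by (simp add: prod.distrib)
    also have "\<dots> = 1" using fac_even[OF _ s, of z] False by (simp add: fac_even[OF _ s])
    also have "\<dots> = fac 1 (t * s) * (1 - fps_X ^ (t * s))" using fac_even[OF ts, of 1] by simp
    finally have "(\<Prod>z\<in>?U. fac z s) * (1 - fps_X ^ (t * s)) = fac 1 (t * s) * (1 - fps_X ^ (t * s))" .
    moreover have "(1 - fps_X ^ (t * s) :: cfps) \<noteq> 0"
    proof
      assume "(1 - fps_X ^ (t * s) :: cfps) = 0"
      hence "fps_nth (1 - fps_X ^ (t * s) :: cfps) 0 = fps_nth (0::cfps) 0" by (rule arg_cong)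
      thus False using ts by simp
    qed
    ultimately show ?thesis by simp
  qed
qed

lemma prod_roots_PP:
  assumes t: "odd t"
  shows "(\<Prod>z\<in>{z::complex. z ^ t = 1}. PP z L) = (\<Prod>s\<in>{1..L}. fac 1 (t * s))"
  unfolding PP_def by (subst prod.swap) (intro prod.cong refl prod_roots_fac[OF t], auto)

definition tsupp :: "nat \<Rightarrow> cfps \<Rightarrow> bool" where
  "tsupp t f \<longleftrightarrow> (\<forall>i. \<not> t dvd i \<longrightarrow> f $ i = 0)"

lemma tsupp_1[simp]: "tsupp t 1" by (auto simp: tsupp_def)

lemma tsupp_mult: "tsupp t f \<Longrightarrow> tsupp t g \<Longrightarrow> tsupp t (f * g)"
  unfolding tsupp_def fps_mult_nth
proof (intro allI impI sum.neutral ballI)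
  fix i j assume f: "\<forall>i. \<not> t dvd i \<longrightarrow> f $ i = 0" and g: "\<forall>i. \<not> t dvd i \<longrightarrow> g $ i = 0"
    and i: "\<not> t dvd i" and j: "j \<in> {0..i}"
  show "f $ j * g $ (i - j) = 0"
  proof (cases "t dvd j")
    case True
    hence "\<not> t dvd (i - j)" using i j by (metis atLeastAtMost_iff dvd_add le_add_diff_inverse)
    thus ?thesis using g by simp
  qed (use f in simp)
qed

lemma tsupp_prod: "tsupp t (\<Prod>s\<in>B. f s)" if "\<And>s. s \<in> B \<Longrightarrow> tsupp t (f s)"
  using that by (induction B rule: infinite_finite_induct) (auto intro: tsupp_mult)

lemma tsupp_fac: "0 < t \<Longrightarrow> tsupp t (fac 1 (t * s))"
  by (auto simp: tsupp_def fac_nth dest: dvd_mult_left)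

definition podset :: "nat \<Rightarrow> nat multiset set" where
  "podset n = {\<pi>. is_pod \<pi> \<and> sum_mset \<pi> = n}"

definition Pw :: "complex \<Rightarrow> cfps" where
  "Pw x = Abs_fps (\<lambda>n. \<Sum>\<pi>\<in>podset n. x ^ size \<pi>)"

lemma podsL_podset: "n \<le> L \<Longrightarrow> podsL L n = podset n"
  by (auto simp: podsL_def podset_def dest: elem_le_sum)

lemma finite_podset: "finite (podset n)"
  by (rule finite_subset[OF _ finite_pos_msets[of n]]) (auto simp: podset_def is_pod_def)

lemma Pw_feq: "N \<le> L \<Longrightarrow> feq N (Pw x) (PP x L)"
  by (auto simp: feq_def Pw_def PP_nth podsL_podset)


lemma finite_pods_le: "finite {\<pi>. is_pod \<pi> \<and> sum_mset \<pi> \<le> n}"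
proof -
  have "{\<pi>. is_pod \<pi> \<and> sum_mset \<pi> \<le> n} = (\<Union>i\<in>{0..n}. podset i)"
    by (auto simp: podset_def)
  thus ?thesis using finite_podset by simp
qed

lemma finite_colored: "finite (colored_pods c n)"
proof (rule finite_subset)
  show "colored_pods c n \<subseteq> {xs. set xs \<subseteq> {\<pi>. is_pod \<pi> \<and> sum_mset \<pi> \<le> n} \<and> length xs = c}"
  proof
    fix ps assume ps: "ps \<in> colored_pods c n"
    have "\<forall>\<pi>\<in>set ps. is_pod \<pi> \<and> sum_mset \<pi> \<le> n"
    proof
      fix \<pi> assume p: "\<pi> \<in> set ps"
      have "sum_mset \<pi> \<in> set (map sum_mset ps)" using p by simp
      hence "sum_mset \<pi> \<le> sum_list (map sum_mset ps)" using member_le_sum_list[of "sum_mset \<pi>" "map sum_mset ps"] by simp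
      thus "is_pod \<pi> \<and> sum_mset \<pi> \<le> n" using ps p by (auto simp: colored_pods_def)
    qed
    thus "ps \<in> {xs. set xs \<subseteq> {\<pi>. is_pod \<pi> \<and> sum_mset \<pi> \<le> n} \<and> length xs = c}"
      using ps by (auto simp: colored_pods_def)
  qed
  show "finite {xs. set xs \<subseteq> {\<pi>. is_pod \<pi> \<and> sum_mset \<pi> \<le> n} \<and> length xs = c}"
    by (rule finite_lists_length_eq[OF finite_pods_le])
qed

lemma colored_0: "colored_pods 0 n = (if n = 0 then {[]} else {})"
  by (auto simp: colored_pods_def)

lemma colored_Suc_sum:
  fixes w :: "nat \<Rightarrow> complex"
  shows "(\<Sum>ps\<in>colored_pods (Suc c) n. \<Prod>k<Suc c. w k ^ size (ps ! k)) =
   (\<Sum>p\<in>Sigma {0..n} (\<lambda>i. podset i \<times> colored_pods c (n - i)).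
        w 0 ^ size (fst (snd p)) * (\<Prod>k<c. w (Suc k) ^ size (snd (snd p) ! k)))"
proof (rule sum.reindex_bij_witness[where j="\<lambda>ps. (sum_mset (hd ps), hd ps, tl ps)"
      and i="\<lambda>p. fst (snd p) # snd (snd p)"])
  fix ps assume ps: "ps \<in> colored_pods (Suc c) n"
  then obtain \<pi> qs where pq: "ps = \<pi> # qs" by (cases ps) (auto simp: colored_pods_def)
  show "fst (snd (sum_mset (hd ps), hd ps, tl ps)) # snd (snd (sum_mset (hd ps), hd ps, tl ps)) = ps"
    using pq by simp
  show "(sum_mset (hd ps), hd ps, tl ps) \<in> Sigma {0..n} (\<lambda>i. podset i \<times> colored_pods c (n - i))"
    using ps pq by (auto simp: colored_pods_def podset_def)
  show "w 0 ^ size (fst (snd (sum_mset (hd ps), hd ps, tl ps))) *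
        (\<Prod>k<c. w (Suc k) ^ size (snd (snd (sum_mset (hd ps), hd ps, tl ps)) ! k)) =
        (\<Prod>k<Suc c. w k ^ size (ps ! k))"
    using pq by (simp only: prod.lessThan_Suc_shift nth_Cons_0 nth_Cons_Suc list.sel fst_conv snd_conv)
next
  fix p assume p: "p \<in> Sigma {0..n} (\<lambda>i. podset i \<times> colored_pods c (n - i))"
  obtain i \<pi> qs where pq: "p = (i, \<pi>, qs)" by (cases p) auto
  show "(sum_mset (hd (fst (snd p) # snd (snd p))), hd (fst (snd p) # snd (snd p)), tl (fst (snd p) # snd (snd p))) = p"
    using p pq by (simp add: podset_def)
  show "fst (snd p) # snd (snd p) \<in> colored_pods (Suc c) n"
    using p pq by (auto simp: podset_def colored_pods_def)
qed

lemma colored_sum: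
  fixes w :: "nat \<Rightarrow> complex"
  shows "(\<Sum>ps\<in>colored_pods c n. \<Prod>k<c. w k ^ size (ps ! k)) = (\<Prod>k<c. Pw (w k)) $ n"
proof (induction c arbitrary: w n)
  case 0 thus ?case by (simp add: colored_0)
next
  case (Suc c)
  have "(\<Prod>k<Suc c. Pw (w k)) $ n = (Pw (w 0) * (\<Prod>k<c. Pw (w (Suc k)))) $ n"
    by (simp only: prod.lessThan_Suc_shift)
  also have "\<dots> = (\<Sum>i=0..n. (\<Sum>\<pi>\<in>podset i. w 0 ^ size \<pi>) *
                 (\<Sum>qs\<in>colored_pods c (n - i). \<Prod>k<c. w (Suc k) ^ size (qs ! k)))"
    by (simp only: fps_mult_nth Suc.IH[of "\<lambda>k. w (Suc k)", symmetric]) (simp add: Pw_def)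
  also have "\<dots> = (\<Sum>i\<in>{0..n}. \<Sum>q\<in>podset i \<times> colored_pods c (n - i).
                   w 0 ^ size (fst q) * (\<Prod>k<c. w (Suc k) ^ size (snd q ! k)))"
    by (intro sum.cong refl) (simp add: sum_product sum.cartesian_product split_beta)
  also have "\<dots> = (\<Sum>p\<in>Sigma {0..n} (\<lambda>i. podset i \<times> colored_pods c (n - i)).
        w 0 ^ size (fst (snd p)) * (\<Prod>k<c. w (Suc k) ^ size (snd (snd p) ! k)))"
    using finite_podset finite_colored by (simp add: sum.Sigma split_beta)
  also have "\<dots> = (\<Sum>ps\<in>colored_pods (Suc c) n. \<Prod>k<Suc c. w k ^ size (ps ! k))"
    by (rule colored_Suc_sum[symmetric])
  finally show ?case ..
qed


definition sg :: "cfps \<Rightarrow> cfps" where "sg f = Abs_fps (\<lambda>i. (-1) ^ i * f $ i)"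

lemma sg_nth: "sg f $ i = (-1) ^ i * f $ i" by (simp add: sg_def)

lemma sg_mult: "sg (f * g) = sg f * sg g"
proof (rule fps_ext)
  fix i
  have "sg (f * g) $ i = (\<Sum>j=0..i. (-1) ^ i * (f $ j * g $ (i - j)))"
    by (simp add: sg_nth fps_mult_nth sum_distrib_left)
  also have "\<dots> = (\<Sum>j=0..i. ((-1) ^ j * f $ j) * ((-1) ^ (i - j) * g $ (i - j)))"
  proof (intro sum.cong refl)
    fix j assume "j \<in> {0..i}"
    hence "(-1::complex) ^ i = (-1) ^ j * (-1) ^ (i - j)" by (simp add: power_add[symmetric])
    thus "(-1) ^ i * (f $ j * g $ (i - j)) = ((-1) ^ j * f $ j) * ((-1) ^ (i - j) * g $ (i - j))"
      by (simp add: algebra_simps)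
  qed
  also have "\<dots> = (sg f * sg g) $ i" by (simp add: sg_nth fps_mult_nth)
  finally show "sg (f * g) $ i = (sg f * sg g) $ i" .
qed

lemma sg_1[simp]: "sg 1 = 1" by (rule fps_ext) (simp add: sg_nth)

lemma sg_sg[simp]: "sg (sg f) = f"
  by (rule fps_ext) (simp add: sg_nth power_mult_distrib[symmetric])

lemma sg_prod: "sg (\<Prod>a\<in>B. f a) = (\<Prod>a\<in>B. sg (f a))"
  by (induction B rule: infinite_finite_induct) (auto simp: sg_mult)

lemma sg_feq: "feq N f g \<Longrightarrow> feq N (sg f) (sg g)"
  by (simp add: feq_def sg_nth)

lemma sg_nth0[simp]: "sg f $ 0 = f $ 0" by (simp add: sg_nth)

lemma sg_even: "even s \<Longrightarrow> sg (1 - fps_X ^ s) = 1 - fps_X ^ s"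
  by (rule fps_ext) (auto simp: sg_nth)

lemma sg_odd: "odd s \<Longrightarrow> sg (1 + fps_X ^ s) = 1 - fps_X ^ s"
  by (rule fps_ext) (use odd_pos[of s] in \<open>auto simp: sg_nth\<close>)

lemma Theta_supp: "Theta n' $ m \<noteq> 0 \<Longrightarrow> \<exists>k. m = tr k"
proof (rule ccontr)
  assume h: "Theta n' $ m \<noteq> 0" and nk: "\<not> (\<exists>k. m = tr k)"
  have "Theta n' $ m = (\<Sum>k\<in>{- int n'..int n'}. (fps_X ^ tr k :: cfps) $ m)"
    by (simp add: Theta_def fps_sum_nth)
  also have "\<dots> = 0" using nk by (intro sum.neutral) auto
  finally show False using h by simp
qed

lemma gauss_G: "\<exists>G. feq n (PP 1 (2 * n) * G) 1 \<and> (\<forall>m. G $ m \<noteq> 0 \<longrightarrow> (\<exists>k. m = tr k))"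
proof -
  define M where "M = n"
  have odd_f: "fac 1 (2 * m - 1) = 1 + fps_X ^ (2 * m - 1)" if "m \<in> {1..M}" for m
    using that by (subst fac_odd) auto
  have ev_f: "fac 1 (2 * m) * (1 - fps_X ^ (2 * m)) = 1" if "m \<in> {1..M}" for m
    using that fac_even[of "2 * m" 1] by auto
  have split: "PP 1 (2 * M) = (\<Prod>m\<in>{1..M}. fac 1 (2 * m - 1)) * (\<Prod>m\<in>{1..M}. fac 1 (2 * m))"
    unfolding PP_def by (rule prod_split_odd_even)
  have o: "(\<Prod>m\<in>{1..M}. sg (fac 1 (2 * m - 1))) = Oq M"
    unfolding Oq_def
  proof (intro prod.cong refl)
    fix m assume m: "m \<in> {1..M}"
    have "odd (2 * m - 1)" using m by auto
    thus "sg (fac 1 (2 * m - 1)) = 1 - fps_X ^ (2 * m - 1)" using odd_f[OF m] sg_odd by simp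
  qed
  have e: "(\<Prod>m\<in>{1..M}. sg (fac 1 (2 * m))) * Eq2 M = 1"
  proof -
    have "(\<Prod>m\<in>{1..M}. sg (fac 1 (2 * m))) * Eq2 M = (\<Prod>m\<in>{1..M}. sg (fac 1 (2 * m) * (1 - fps_X ^ (2 * m))))"
      unfolding Eq2_def prod.distrib[symmetric] by (intro prod.cong refl) (simp add: sg_mult sg_even)
    also have "\<dots> = 1" by (intro prod.neutral ballI) (simp add: ev_f)
    finally show ?thesis .
  qed
  have key: "sg (PP 1 (2 * M)) * Eq2 M = Oq M"
    unfolding split sg_mult sg_prod o by (metis e mult.assoc mult.commute mult_1_right)
  have g: "feq n (Oq M * Theta (2 * n + 2)) (2 * Eq2 M)"
    by (rule gauss_feq) (simp_all add: M_def)
  hence "feq n ((sg (PP 1 (2 * M)) * Theta (2 * n + 2)) * Eq2 M) (2 * Eq2 M)"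
    by (simp add: key[symmetric] mult_ac)
  hence "feq n (sg (PP 1 (2 * M)) * Theta (2 * n + 2)) 2"
    by (rule feq_cancel[rotated]) simp
  hence "feq n (sg (PP 1 (2 * M)) * Theta (2 * n + 2) * fps_const (1/2)) (2 * fps_const (1/2))"
    by (rule feq_mult_right)
  moreover have "(2::cfps) * fps_const (1/2) = 1"
    by (metis fps_const_mult fps_numeral_fps_const fps_const_1_eq_1 nonzero_divide_eq_eq zero_neq_numeral mult.commute)
  ultimately have "feq n (sg (PP 1 (2 * M)) * (fps_const (1/2) * Theta (2 * n + 2))) 1"
    by (simp add: mult_ac)
  hence "feq n (sg (sg (PP 1 (2 * M)) * (fps_const (1/2) * Theta (2 * n + 2)))) (sg 1)"
    by (rule sg_feq)
  hence F: "feq n (PP 1 (2 * n) * sg (fps_const (1/2) * Theta (2 * n + 2))) 1"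
    by (simp add: sg_mult M_def)
  have S: "\<forall>m. sg (fps_const (1/2) * Theta (2 * n + 2)) $ m \<noteq> 0 \<longrightarrow> (\<exists>k. m = tr k)"
    using Theta_supp by (auto simp: sg_nth)
  from F S show ?thesis by blast
qed


definition E :: "nat \<Rightarrow> int \<Rightarrow> complex" where
  "E t m = cis (2 * pi * of_int m / of_nat t)"

lemma E_add: "E t (a + b) = E t a * E t b"
  by (simp add: E_def cis_mult add_divide_distrib distrib_left)

lemma E_0[simp]: "E t 0 = 1" by (simp add: E_def)

lemma E_nz: "E t a \<noteq> 0" by (simp add: E_def)

lemma E_mult_nat: "E t (a * int l) = E t a ^ l"
  by (simp add: E_def DeMoivre mult_ac)

lemma E_mult_t: "0 < t \<Longrightarrow> E t (int t * k) = 1"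
proof -
  assume t: "0 < t"
  have "2 * pi * of_int (int t * k) / of_nat t = 2 * pi * of_int k" using t by simp
  thus ?thesis unfolding E_def by simp
qed

lemma E_cong: "0 < t \<Longrightarrow> int t dvd (a - b) \<Longrightarrow> E t a = E t b"
proof -
  assume t: "0 < t" and d: "int t dvd (a - b)"
  then obtain k where "a - b = int t * k" by blast
  hence "a = (int t * k) + b" by simp
  thus ?thesis using E_add[of t "int t * k" b] E_mult_t[OF t] by simp
qed

lemma E_eq_1: assumes t: "0 < t" and e: "E t m = 1" shows "int t dvd m"
proof -
  have "cos (2 * pi * of_int m / of_nat t) = 1"
    using e unfolding E_def by (metis cis.sel(1) one_complex.sel(1))
  then obtain k :: int where "2 * pi * of_int m / of_nat t = of_int k * 2 * pi"
    by (auto simp: cos_one_2pi_int)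
  hence "real_of_int m = real_of_int (k * int t)" using t by (simp add: field_simps)
  hence "m = k * int t" by (simp only: of_int_eq_iff)
  thus ?thesis by simp
qed

lemma E_sum: "E t (\<Sum>a\<in>B. f a) = (\<Prod>a\<in>B. E t (f a))"
  by (induction B rule: infinite_finite_induct) (auto simp: E_add)

lemma E_sum_roots:
  assumes t: "0 < t"
  shows "(\<Sum>j<t. E t (int j * m)) = (if int t dvd m then of_nat t else 0)"
proof (cases "int t dvd m")
  case True
  have "E t (int j * m) = 1" for j
    using E_cong[OF t, of "int j * m" 0] True by simp
  thus ?thesis using True by simp
next
  case False
  have ne: "E t m \<noteq> 1" using False E_eq_1[OF t] by blast
  have "(\<Sum>j<t. E t (int j * m)) = (\<Sum>j<t. E t m ^ j)"
    by (intro sum.cong refl) (simp add: E_mult_nat[symmetric] mult.commute)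
  also have "\<dots> = (E t m ^ t - 1) / (E t m - 1)" using ne by (rule geometric_sum)
  also have "E t m ^ t = 1" using E_mult_nat[of t m t] E_mult_t[OF t, of m] by (simp add: mult.commute)
  finally show ?thesis using False by simp
qed


lemma mr_E:
  assumes t: "odd t"
  shows "E t (int j * multirank t ps) = (\<Prod>k<t - 1. E t (int j * (int k + 1)) ^ size (ps ! k))"
proof -
  define h where "h = (t - 1) div 2"
  have th: "t = 2 * h + 1" using t by (simp add: h_def)
  have t0: "0 < t" using th by simp
  let ?l = "\<lambda>k. size (ps ! k)"
  have "E t (int j * multirank t ps) =
        E t (\<Sum>k\<in>{1..h}. int j * int k * int (?l (k - 1)) + (- (int j * int k)) * int (?l (t - k - 1)))"
    unfolding multirank_def pod_len_def h_def[symmetric] sum_distrib_left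
    by (simp add: algebra_simps)
  also have "\<dots> = (\<Prod>k\<in>{1..h}. E t (int j * int k * int (?l (k - 1))) * E t ((- (int j * int k)) * int (?l (t - k - 1))))"
    by (simp only: E_sum E_add)
  also have "\<dots> = (\<Prod>k\<in>{1..h}. E t (int j * int k) ^ ?l (k - 1) * E t (int j * int (t - k)) ^ ?l (t - k - 1))"
  proof (intro prod.cong refl)
    fix k assume k: "k \<in> {1..h}"
    have "(- (int j * int k)) - int j * int (t - k) = int t * (- int j)"
      using k th by (simp add: of_nat_diff algebra_simps)
    hence "E t (- (int j * int k)) = E t (int j * int (t - k))"
      by (intro E_cong[OF t0]) (metis dvd_triv_left)
    thus "E t (int j * int k * int (?l (k - 1))) * E t ((- (int j * int k)) * int (?l (t - k - 1))) =
          E t (int j * int k) ^ ?l (k - 1) * E t (int j * int (t - k)) ^ ?l (t - k - 1)"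
      by (simp only: E_mult_nat)
  qed
  also have "\<dots> = (\<Prod>k\<in>{1..h}. E t (int j * int k) ^ ?l (k - 1)) * (\<Prod>k\<in>{1..h}. E t (int j * int (t - k)) ^ ?l (t - k - 1))"
    by (rule prod.distrib)
  also have "(\<Prod>k\<in>{1..h}. E t (int j * int (t - k)) ^ ?l (t - k - 1)) = (\<Prod>m\<in>{h+1..2*h}. E t (int j * int m) ^ ?l (m - 1))"
    by (rule prod.reindex_bij_witness[where i="\<lambda>m. t - m" and j="\<lambda>k. t - k"]) (auto simp: th)
  also have "(\<Prod>k\<in>{1..h}. E t (int j * int k) ^ ?l (k - 1)) * \<dots> = (\<Prod>m\<in>{1..2*h}. E t (int j * int m) ^ ?l (m - 1))"
  proof -
    have "{1..2*h} = {1..h} \<union> {h+1..2*h}" by auto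
    thus ?thesis by (simp add: prod.union_disjoint[symmetric] ivl_disj_int)
  qed
  also have "\<dots> = (\<Prod>k<t - 1. E t (int j * (int k + 1)) ^ ?l k)"
    by (rule prod.reindex_bij_witness[where i="\<lambda>k. k + 1" and j="\<lambda>m. m - 1"]) (auto simp: th)
  finally show ?thesis .
qed

lemma roots_bij:
  assumes t: "prime t" and j: "0 < j" "j < t"
  shows "bij_betw (\<lambda>k. E t (int j * int k)) {..<t} {z. z ^ t = 1}"
proof -
  have t0: "0 < t" using t prime_gt_0_nat by blast
  have inj: "inj_on (\<lambda>k. E t (int j * int k)) {..<t}"
  proof (rule inj_onI)
    fix a b assume a: "a \<in> {..<t}" and b: "b \<in> {..<t}" and e: "E t (int j * int a) = E t (int j * int b)"
    have "E t (int j * int a) = E t (int j * int a - int j * int b) * E t (int j * int b)"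
      by (simp flip: E_add)
    hence "E t (int j * int a - int j * int b) = 1" using e E_nz[of t] by simp
    hence "int t dvd int j * (int a - int b)" using E_eq_1[OF t0] by (simp add: algebra_simps)
    moreover have "\<not> int t dvd int j" using j nat_dvd_not_less[of j t] by simp
    moreover have "prime (int t)" using t by simp
    ultimately have "int t dvd (int a - int b)" using prime_dvd_mult_iff by blast
    moreover have "\<bar>int a - int b\<bar> < int t" using a b by auto
    ultimately have "int a - int b = 0"
      using dvd_imp_le_int[of "int a - int b" "int t"] by (cases "int a - int b = 0") auto
    thus "a = b" by simp
  qed
  have sub: "(\<lambda>k. E t (int j * int k)) ` {..<t} \<subseteq> {z. z ^ t = 1}"
  proof safe
    fix k
    have "E t (int j * int k) ^ t = E t (int t * (int j * int k))"
      by (simp add: E_mult_nat[symmetric] mult_ac)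
    thus "E t (int j * int k) ^ t = 1" using E_mult_t[OF t0] by simp
  qed
  have "card ((\<lambda>k. E t (int j * int k)) ` {..<t}) = card {z::complex. z ^ t = 1}"
    using card_image[OF inj] card_roots_unity_eq[OF t0] by simp
  hence "(\<lambda>k. E t (int j * int k)) ` {..<t} = {z. z ^ t = 1}"
    using sub finite_roots_unity[of t] t0 by (intro card_subset_eq) auto
  thus ?thesis using inj by (simp add: bij_betw_def)
qed


lemma no_tri:
  assumes leg: "Legendre (int (8 * n + 1)) (int t) = -1" and d: "t dvd i" and i: "i \<le> n"
  shows "n - i \<noteq> tr k"
proof
  assume e: "n - i = tr k"
  have "int (8 * n + 1) - (2 * k + 1) ^ 2 = 8 * int i"
    using tr_int[of k] e i by (simp add: power2_eq_square algebra_simps of_nat_diff)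
  hence "(2 * k + 1) ^ 2 - int (8 * n + 1) = - (8 * int i)" by simp
  moreover have "int t dvd 8 * int i" using d by simp
  ultimately have "int t dvd (2 * k + 1) ^ 2 - int (8 * n + 1)" by simp
  hence "[(2 * k + 1) ^ 2 = int (8 * n + 1)] (mod int t)"
    by (simp only: cong_iff_dvd_diff)
  hence "QuadRes (int t) (int (8 * n + 1))" by (auto simp: QuadRes_def)
  thus False using leg by (simp add: Legendre_def split: if_splits)
qed

lemma W_zero:
  assumes t: "prime t" "odd t" and leg: "Legendre (int (8 * n + 1)) (int t) = -1"
    and j: "0 < j" "j < t"
  shows "(\<Sum>ps\<in>colored_pods (t - 1) n. E t (int j * multirank t ps)) = 0"
proof -
  have t0: "0 < t" using t prime_gt_0_nat by blast
  define w where "w k = E t (int j * (int k + 1))" for k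
  have "(\<Sum>ps\<in>colored_pods (t - 1) n. E t (int j * multirank t ps)) =
        (\<Sum>ps\<in>colored_pods (t - 1) n. \<Prod>k<t - 1. w k ^ size (ps ! k))"
    by (intro sum.cong refl) (simp add: mr_E[OF t(2)] w_def)
  also have "\<dots> = (\<Prod>k<t - 1. Pw (w k)) $ n" by (rule colored_sum)
  also have "\<dots> = 0"
  proof -
    let ?V = "\<Prod>k<t - 1. Pw (w k)"
    let ?V' = "\<Prod>k<t - 1. PP (w k) (2 * n)"
    let ?Z = "\<Prod>s\<in>{1..2 * n}. fac 1 (t * s)"
    have fV: "feq n ?V ?V'" by (intro feq_prod) (auto intro: Pw_feq)
    obtain G where G: "feq n (PP 1 (2 * n) * G) 1" and Gs: "\<forall>m. G $ m \<noteq> 0 \<longrightarrow> (\<exists>k. m = tr k)"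
      using gauss_G by blast
    have Z: "?V' * PP 1 (2 * n) = ?Z"
    proof -
      have tt: "t = Suc (t - 1)" using t0 by simp
      have "?V' * PP 1 (2 * n) = (\<Prod>k<Suc (t - 1). PP (E t (int j * int k)) (2 * n))"
        unfolding prod.lessThan_Suc_shift by (simp add: w_def mult.commute add.commute)
      also have "\<dots> = (\<Prod>k<t. PP (E t (int j * int k)) (2 * n))" using tt by simp
      also have "\<dots> = (\<Prod>z\<in>{z. z ^ t = 1}. PP z (2 * n))"
        by (rule prod.reindex_bij_betw[OF roots_bij[OF t(1) j]])
      also have "\<dots> = ?Z" by (rule prod_roots_PP[OF t(2)])
      finally show ?thesis .
    qed
    have ts: "tsupp t ?Z" by (intro tsupp_prod tsupp_fac t0)
    have "feq n (?V * (PP 1 (2 * n) * G)) (?V * 1)" by (rule feq_mult_left[OF G])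
    hence "feq n ?V (?V * (PP 1 (2 * n) * G))" by (simp add: feq_sym)
    also have "feq n (?V * (PP 1 (2 * n) * G)) (?V' * (PP 1 (2 * n) * G))" by (rule feq_mult_right[OF fV])
    also have "?V' * (PP 1 (2 * n) * G) = ?Z * G" by (simp only: mult.assoc[symmetric] Z)
    finally have "?V $ n = (?Z * G) $ n" by (simp add: feq_def)
    also have "(?Z * G) $ n = 0"
      unfolding fps_mult_nth
    proof (intro sum.neutral ballI)
      fix i assume i: "i \<in> {0..n}"
      show "?Z $ i * G $ (n - i) = 0"
      proof (cases "t dvd i")
        case False thus ?thesis using ts by (simp add: tsupp_def)
      next
        case True
        have "G $ (n - i) = 0"
        proof (rule ccontr)
          assume "G $ (n - i) \<noteq> 0"
          then obtain k where "n - i = tr k" using Gs by blast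
          thus False using no_tri[OF leg True] i by auto
        qed
        thus ?thesis by simp
      qed
    qed
    finally show ?thesis .
  qed
  finally show ?thesis .
qed

lemma key:
  assumes t: "prime t" "odd t" and leg: "Legendre (int (8 * n + 1)) (int t) = -1"
  shows "t * N_hat i t n = p_hat (t - 1) n"
proof -
  have t0: "0 < t" using t prime_gt_0_nat by blast
  let ?C = "colored_pods (t - 1) n"
  have fin: "finite ?C" by (rule finite_colored)
  have "(of_nat (t * N_hat i t n) :: complex) = (\<Sum>ps\<in>?C. if int t dvd (multirank t ps - i) then of_nat t else 0)"
    unfolding N_hat_def using fin
    by (simp add: sum.If_cases cong_iff_dvd_diff mult.commute Int_def)
  also have "\<dots> = (\<Sum>ps\<in>?C. \<Sum>j<t. E t (int j * (multirank t ps - i)))"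
    by (intro sum.cong refl) (simp add: E_sum_roots[OF t0])
  also have "\<dots> = (\<Sum>j<t. E t (- (int j * i)) * (\<Sum>ps\<in>?C. E t (int j * multirank t ps)))"
    by (subst sum.swap) (simp add: sum_distrib_left E_add[symmetric] algebra_simps)
  also have "\<dots> = (\<Sum>j<Suc (t - 1). E t (- (int j * i)) * (\<Sum>ps\<in>?C. E t (int j * multirank t ps)))"
    using t0 by simp
  also have "\<dots> = of_nat (card ?C)"
  proof -
    have z: "(\<Sum>ps\<in>?C. E t (int (Suc a) * multirank t ps)) = 0" if "a \<in> {..<t - 1}" for a
      using W_zero[OF t leg, of "Suc a"] that by auto
    have "(\<Sum>a<t - 1. E t (- (int (Suc a) * i)) * (\<Sum>ps\<in>?C. E t (int (Suc a) * multirank t ps))) = 0"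
      by (intro sum.neutral ballI) (simp only: z mult_zero_right)
    thus ?thesis unfolding sum.lessThan_Suc_shift by simp
  qed
  finally have "of_nat (t * N_hat i t n) = (of_nat (card ?C) :: complex)" .
  thus ?thesis unfolding p_hat_def by (simp only: of_nat_eq_iff)
qed


theorem theorem2p4:
  fixes t n :: nat
  assumes "prime t" and "odd t"
    and "Legendre (int (8 * n + 1)) (int t) = -1"
  shows "(\<forall>i::int. 0 \<le> i \<and> i \<le> int t - 1 \<longrightarrow>
            real (N_hat i t n) = real (p_hat (t - 1) n) / real t)
         \<and> t dvd p_hat (t - 1) n"
proof -
  have k: "t * N_hat i t n = p_hat (t - 1) n" for i using key[OF assms] .
  have t0: "0 < t" using assms(1) prime_gt_0_nat by blast
  have A: "real (N_hat i t n) = real (p_hat (t - 1) n) / real t" for i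
  proof -
    have "real (p_hat (t - 1) n) = real t * real (N_hat i t n)" using k[of i] by (metis of_nat_mult)
    thus ?thesis using t0 by (simp add: field_simps)
  qed
  have B: "t dvd p_hat (t - 1) n" using k[of 0] by (metis dvd_triv_left)
  show ?thesis using A B by blast
qed

end
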